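(* Let $L$ be a multisorted algebra in the positive quantifier-free signature with equality satisfying axioms (1), (2), (3), (11), (12), (13). Let $F$ be a prime filter on sort $n$ of $L$. Let $F_1,\dots,F_n$ be symbols such that $F_i=F_j$ if and only if $\Delta^n_{i,j}\in F$, and let $W=\{F_1,\dots,F_n\}$. Define $\varphi\colon L\to A(W)$ on each sort $k$ by: for each substitution $\alpha\colon k\to n$, $\alpha^{\mathrm{tuple}}(F_1,\dots,F_n)\in\varphi(r)$ if and only if $\alpha(r)\in F$. Then $\varphi$ is (well defined and) a morphism of positive quantifier-free algebras with equality.
   Context: Signature. There is a sort $n$ for each $n\ge0$. For every function $\alpha\colon\{1,\dots,n\}\to\{1,\dots,k\}$ there is a unary function symbol ("substitution") $\alpha\colon n\to k$ (argument of sort $n$, value of sort $k$). Each sort has constants $0,1$ and binary $\vee,\wedge$; for each $n$ and $1\le i,j\le n$ there is a constant $\Delta^n_{i,j}$ of sort $n$. This is the positive quantifier-free signature with equality. For $\alpha\colon k\to n$, $\beta\colon n\to m$, $\beta\circ\alpha$ is the substitution symbol of the composite function. For a set $W$: $\alpha^{\mathrm{tuple}}(x_1,\dots,x_k)=(x_{\alpha(1)},\dots,x_{\alpha(n)})$, $\alpha^{\mathrm{relation}}(r)=\{\bar x\in W^k:\alpha^{\mathrm{tuple}}(\bar x)\in r\}$. The positive quantifier-free algebra with equality $A(W)$ interprets sort $n$ as $\mathcal P(W^n)$, $\alpha$ as $\alpha^{\mathrm{relation}}$, $0,1,\vee,\wedge$ as $\emptyset,W^n,\cup,\cap$, and $\Delta^n_{i,j}=\{(x_1,\dots,x_n)\in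 W^n: x_i=x_j\}$. $x\le y$ means $x=x\wedge y$. Axioms: (1) each sort is a bounded distributive lattice; (2) substitutions preserve $0,1,\vee,\wedge$; (3) $(\beta\circ\alpha)(r)=\beta(\alpha(r))$; (11) $\Delta^n_{i,i}=1$, $\Delta^n_{i,j}=\Delta^n_{j,i}$, $\Delta^n_{i,j}\wedge\Delta^n_{j,k}\le\Delta^n_{i,k}$; (12) for substitutions $\alpha,\beta\colon k\to n$ and all $r$ of sort $k$: $\alpha(r)\wedge\bigwedge_{l=1}^k\Delta^n_{\alpha(l),\beta(l)}=\beta(r)\wedge\bigwedge_{l=1}^k\Delta^n_{\alpha(l),\beta(l)}$; (13) for each substitution $\alpha\colon k\to n$: $\alpha(\Delta^k_{i,j})=\Delta^n_{\alpha(i),\alpha(j)}$. A prime filter is a proper, nonempty, upward-closed, $\wedge$-closed subset of a sort with $x\vee y\in F\Rightarrow x\in F$ or $y\in F$. *)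

theory Defs
  imports "HOL-Library.FuncSet"
begin

text \<open>A substitution symbol alpha : n -> k (argument sort n,
  value sort k) is represented by an extensional function alpha in {1..n} ->E {1..k}.
  psub L n k alpha is the operation of that symbol.\<close>

record 'a pqf_alg =
  car    :: "nat \<Rightarrow> 'a set"
  pzero  :: "nat \<Rightarrow> 'a"
  pone   :: "nat \<Rightarrow> 'a"
  pjoin  :: "nat \<Rightarrow> 'a \<Rightarrow> 'a \<Rightarrow> 'a"
  pmeet  :: "nat \<Rightarrow> 'a \<Rightarrow> 'a \<Rightarrow> 'a"
  pdelta :: "nat \<Rightarrow> nat \<Rightarrow> nat \<Rightarrow> 'a"
  psub   :: "nat \<Rightarrow> nat \<Rightarrow> (nat \<Rightarrow> nat) \<Rightarrow> 'a \<Rightarrow> 'a"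

definition substs :: "nat \<Rightarrow> nat \<Rightarrow> (nat \<Rightarrow> nat) set" where
  "substs n k = ({1..n} \<rightarrow>\<^sub>E {1..k})"

definition comp_subst :: "nat \<Rightarrow> (nat \<Rightarrow> nat) \<Rightarrow> (nat \<Rightarrow> nat) \<Rightarrow> (nat \<Rightarrow> nat)" where
  "comp_subst k beta alpha = restrict (beta \<circ> alpha) {1..k}"

definition ple :: "'a pqf_alg \<Rightarrow> nat \<Rightarrow> 'a \<Rightarrow> 'a \<Rightarrow> bool" where
  "ple L n x y \<longleftrightarrow> x = pmeet L n x y"

fun bigmeet :: "'a pqf_alg \<Rightarrow> nat \<Rightarrow> (nat \<Rightarrow> 'a) \<Rightarrow> nat \<Rightarrow> 'a" where
  "bigmeet L n f 0 = pone L n"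
| "bigmeet L n f (Suc l) = pmeet L n (bigmeet L n f l) (f (Suc l))"

definition pqf_closed :: "'a pqf_alg \<Rightarrow> bool" where
  "pqf_closed L \<longleftrightarrow>
     (\<forall>n. pzero L n \<in> car L n \<and> pone L n \<in> car L n
        \<and> (\<forall>x\<in>car L n. \<forall>y\<in>car L n. pjoin L n x y \<in> car L n \<and> pmeet L n x y \<in> car L n)
        \<and> (\<forall>i\<in>{1..n}. \<forall>j\<in>{1..n}. pdelta L n i j \<in> car L n))
   \<and> (\<forall>n k. \<forall>\<alpha>\<in>substs n k. \<forall>r\<in>car L n. psub L n k \<alpha> r \<in> car L k)"

definition pqf_ax1 :: "'a pqf_alg \<Rightarrow> bool" where
  "pqf_ax1 L \<longleftrightarrow> (\<forall>n. \<forall>x\<in>car L n. \<forall>y\<in>car L n. \<forall>z\<in>car L n.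
       pjoin L n (pjoin L n x y) z = pjoin L n x (pjoin L n y z)
     \<and> pmeet L n (pmeet L n x y) z = pmeet L n x (pmeet L n y z)
     \<and> pjoin L n x y = pjoin L n y x
     \<and> pmeet L n x y = pmeet L n y x
     \<and> pjoin L n x x = x
     \<and> pmeet L n x x = x
     \<and> pjoin L n x (pmeet L n x y) = x
     \<and> pmeet L n x (pjoin L n x y) = x
     \<and> pmeet L n x (pjoin L n y z) = pjoin L n (pmeet L n x y) (pmeet L n x z)
     \<and> pjoin L n x (pmeet L n y z) = pmeet L n (pjoin L n x y) (pjoin L n x z)
     \<and> pjoin L n x (pzero L n) = x
     \<and> pmeet L n x (pone L n) = x)"

definition pqf_ax2 :: "'a pqf_alg \<Rightarrow> bool" where
  "pqf_ax2 L \<longleftrightarrow> (\<forall>n k. \<forall>\<alpha>\<in>substs n k.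
       psub L n k \<alpha> (pzero L n) = pzero L k
     \<and> psub L n k \<alpha> (pone L n) = pone L k
     \<and> (\<forall>x\<in>car L n. \<forall>y\<in>car L n.
          psub L n k \<alpha> (pjoin L n x y) = pjoin L k (psub L n k \<alpha> x) (psub L n k \<alpha> y)
        \<and> psub L n k \<alpha> (pmeet L n x y) = pmeet L k (psub L n k \<alpha> x) (psub L n k \<alpha> y)))"

definition pqf_ax3 :: "'a pqf_alg \<Rightarrow> bool" where
  "pqf_ax3 L \<longleftrightarrow> (\<forall>k n m. \<forall>\<alpha>\<in>substs k n. \<forall>\<beta>\<in>substs n m. \<forall>r\<in>car L k.
       psub L k m (comp_subst k \<beta> \<alpha>) r = psub L n m \<beta> (psub L k n \<alpha> r))"

definition pqf_ax11 :: "'a pqf_alg \<Rightarrow> bool" where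
  "pqf_ax11 L \<longleftrightarrow> (\<forall>n. \<forall>i\<in>{1..n}. \<forall>j\<in>{1..n}. \<forall>k\<in>{1..n}.
       pdelta L n i i = pone L n
     \<and> pdelta L n i j = pdelta L n j i
     \<and> ple L n (pmeet L n (pdelta L n i j) (pdelta L n j k)) (pdelta L n i k))"

definition pqf_ax12 :: "'a pqf_alg \<Rightarrow> bool" where
  "pqf_ax12 L \<longleftrightarrow> (\<forall>k n. \<forall>\<alpha>\<in>substs k n. \<forall>\<beta>\<in>substs k n. \<forall>r\<in>car L k.
       pmeet L n (psub L k n \<alpha> r) (bigmeet L n (\<lambda>l. pdelta L n (\<alpha> l) (\<beta> l)) k)
     = pmeet L n (psub L k n \<beta> r) (bigmeet L n (\<lambda>l. pdelta L n (\<alpha> l) (\<beta> l)) k))"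

definition pqf_ax13 :: "'a pqf_alg \<Rightarrow> bool" where
  "pqf_ax13 L \<longleftrightarrow> (\<forall>k n. \<forall>\<alpha>\<in>substs k n. \<forall>i\<in>{1..k}. \<forall>j\<in>{1..k}.
       psub L k n \<alpha> (pdelta L k i j) = pdelta L n (\<alpha> i) (\<alpha> j))"

definition prime_filter :: "'a pqf_alg \<Rightarrow> nat \<Rightarrow> 'a set \<Rightarrow> bool" where
  "prime_filter L n F \<longleftrightarrow>
     F \<subseteq> car L n \<and> F \<noteq> car L n \<and> F \<noteq> {}
   \<and> (\<forall>x\<in>F. \<forall>y\<in>car L n. ple L n x y \<longrightarrow> y \<in> F)
   \<and> (\<forall>x\<in>F. \<forall>y\<in>F. pmeet L n x y \<in> F)
   \<and> (\<forall>x\<in>car L n. \<forall>y\<in>car L n. pjoin L n x y \<in> F \<longrightarrow> x \<in> F \<or> y \<in> F)"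

text \<open>The algebra A(W): sort n is the powerset of W^n, where W^n is represented
  by extensional tuples {1..n} ->E W.\<close>
definition tuples :: "nat \<Rightarrow> 'w set \<Rightarrow> (nat \<Rightarrow> 'w) set" where
  "tuples n W = ({1..n} \<rightarrow>\<^sub>E W)"

definition tuple_sub :: "nat \<Rightarrow> (nat \<Rightarrow> nat) \<Rightarrow> (nat \<Rightarrow> 'w) \<Rightarrow> (nat \<Rightarrow> 'w)" where
  "tuple_sub n \<alpha> x = restrict (x \<circ> \<alpha>) {1..n}"

definition rel_sub :: "'w set \<Rightarrow> nat \<Rightarrow> nat \<Rightarrow> (nat \<Rightarrow> nat) \<Rightarrow> (nat \<Rightarrow> 'w) set \<Rightarrow> (nat \<Rightarrow> 'w) set" where
  "rel_sub W n k \<alpha> R = {x \<in> tuples k W. tuple_sub n \<alpha> x \<in> R}"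

definition diagA :: "'w set \<Rightarrow> nat \<Rightarrow> nat \<Rightarrow> nat \<Rightarrow> (nat \<Rightarrow> 'w) set" where
  "diagA W n i j = {x \<in> tuples n W. x i = x j}"

definition pqf_hom_to_A :: "'a pqf_alg \<Rightarrow> 'w set \<Rightarrow> (nat \<Rightarrow> 'a \<Rightarrow> (nat \<Rightarrow> 'w) set) \<Rightarrow> bool" where
  "pqf_hom_to_A L W \<phi> \<longleftrightarrow>
     (\<forall>k. (\<forall>r\<in>car L k. \<phi> k r \<subseteq> tuples k W)
        \<and> \<phi> k (pzero L k) = {}
        \<and> \<phi> k (pone L k) = tuples k W
        \<and> (\<forall>r\<in>car L k. \<forall>s\<in>car L k.
              \<phi> k (pjoin L k r s) = \<phi> k r \<union> \<phi> k s
            \<and> \<phi> k (pmeet L k r s) = \<phi> k r \<inter> \<phi> k s)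
        \<and> (\<forall>i\<in>{1..k}. \<forall>j\<in>{1..k}. \<phi> k (pdelta L k i j) = diagA W k i j))
   \<and> (\<forall>k m. \<forall>\<alpha>\<in>substs k m. \<forall>r\<in>car L k.
        \<phi> m (psub L k m \<alpha> r) = rel_sub W k m \<alpha> (\<phi> k r))"

text \<open>The map phi of the lemma: for alpha : k -> n, alpha^tuple(F_1..F_n) is in phi(r)
  iff alpha(r) in F; every element of W^k has this form.\<close>
definition phiF :: "'a pqf_alg \<Rightarrow> nat \<Rightarrow> 'a set \<Rightarrow> (nat \<Rightarrow> 'w) \<Rightarrow> nat \<Rightarrow> 'a \<Rightarrow> (nat \<Rightarrow> 'w) set" where
  "phiF L n F Fs k r =
     {tuple_sub k \<alpha> Fs | \<alpha>. \<alpha> \<in> substs k n \<and> psub L k n \<alpha> r \<in> F}"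

end

theory Submission
  imports Defs
begin

context
  fixes L :: "'a pqf_alg" and n :: nat and F :: "'a set"
  assumes cl: "pqf_closed L" and a1: "pqf_ax1 L" and pf: "prime_filter L n F"
begin

lemma F_sub: "x \<in> F \<Longrightarrow> x \<in> car L n"
  using pf unfolding prime_filter_def by blast

lemma meet_car: "x \<in> car L n \<Longrightarrow> y \<in> car L n \<Longrightarrow> pmeet L n x y \<in> car L n"
  using cl unfolding pqf_closed_def by blast

lemma join_car: "x \<in> car L n \<Longrightarrow> y \<in> car L n \<Longrightarrow> pjoin L n x y \<in> car L n"
  using cl unfolding pqf_closed_def by blast

lemma F_up: "x \<in> F \<Longrightarrow> y \<in> car L n \<Longrightarrow> pmeet L n x y = x \<Longrightarrow> y \<in> F"
  using pf unfolding prime_filter_def ple_def by metis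

lemma one_F: "pone L n \<in> F"
proof -
  obtain x where x: "x \<in> F" using pf unfolding prime_filter_def by blast
  have "pone L n \<in> car L n" using cl unfolding pqf_closed_def by blast
  moreover have "pmeet L n x (pone L n) = x" using a1 F_sub[OF x] unfolding pqf_ax1_def by blast
  ultimately show ?thesis using F_up x by blast
qed

lemma zero_notF: "pzero L n \<notin> F"
proof
  assume z: "pzero L n \<in> F"
  have zc: "pzero L n \<in> car L n" using cl unfolding pqf_closed_def by blast
  have "car L n \<subseteq> F"
  proof
    fix y assume y: "y \<in> car L n"
    have "pjoin L n (pzero L n) y = y" using a1 y zc unfolding pqf_ax1_def by metis
    moreover have "pmeet L n (pzero L n) (pjoin L n (pzero L n) y) = pzero L n"
      using a1 y zc unfolding pqf_ax1_def by metis
    ultimately show "y \<in> F" using F_up[OF z y] by simp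
  qed
  then show False using pf unfolding prime_filter_def by blast
qed

lemma meet_F_iff: "x \<in> car L n \<Longrightarrow> y \<in> car L n \<Longrightarrow> pmeet L n x y \<in> F \<longleftrightarrow> x \<in> F \<and> y \<in> F"
proof
  assume x: "x \<in> car L n" and y: "y \<in> car L n" and m: "pmeet L n x y \<in> F"
  have "pmeet L n (pmeet L n x y) x = pmeet L n x y"
    using a1 x y unfolding pqf_ax1_def by metis
  moreover have "pmeet L n (pmeet L n x y) y = pmeet L n x y"
    using a1 x y unfolding pqf_ax1_def by metis
  ultimately show "x \<in> F \<and> y \<in> F" using F_up[OF m] x y by blast
next
  assume "x \<in> F \<and> y \<in> F" then show "pmeet L n x y \<in> F"
    using pf unfolding prime_filter_def by blast
qed

lemma join_F_iff: "x \<in> car L n \<Longrightarrow> y \<in> car L n \<Longrightarrow> pjoin L n x y \<in> F \<longleftrightarrow> x \<in> F \<or> y \<in> F"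
proof
  assume x: "x \<in> car L n" and y: "y \<in> car L n"
  assume "pjoin L n x y \<in> F" then show "x \<in> F \<or> y \<in> F"
    using pf x y unfolding prime_filter_def by blast
next
  assume x: "x \<in> car L n" and y: "y \<in> car L n" and o: "x \<in> F \<or> y \<in> F"
  have jc: "pjoin L n x y \<in> car L n" using join_car x y .
  have "pmeet L n x (pjoin L n x y) = x" using a1 x y unfolding pqf_ax1_def by metis
  moreover have "pmeet L n y (pjoin L n x y) = y"
  proof -
    have "pjoin L n x y = pjoin L n y x" using a1 x y unfolding pqf_ax1_def by metis
    moreover have "pmeet L n y (pjoin L n y x) = y" using a1 x y unfolding pqf_ax1_def by metis
    ultimately show ?thesis by simp
  qed
  ultimately show "pjoin L n x y \<in> F" using o F_up jc by metis
qed

lemma bigmeet_F: "(\<And>l. l \<in> {1..k} \<Longrightarrow> f l \<in> F) \<Longrightarrow> l \<le> k \<Longrightarrow> bigmeet L n f l \<in> F \<and> bigmeet L n f l \<in> car L n"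
proof (induction l)
  case 0
  then show ?case using one_F F_sub by simp
next
  case (Suc l)
  then have "f (Suc l) \<in> F" by simp
  then show ?case using Suc meet_F_iff F_sub meet_car by auto
qed

end

lemma substs_mem: "\<alpha> \<in> substs k n \<Longrightarrow> l \<in> {1..k} \<Longrightarrow> \<alpha> l \<in> {1..n}"
  unfolding substs_def by auto

lemma well_def:
  assumes cl: "pqf_closed L" and a1: "pqf_ax1 L" and pf: "prime_filter L n F"
    and a12: "pqf_ax12 L"
    and fs: "\<forall>i\<in>{1..n}. \<forall>j\<in>{1..n}. Fs i = Fs j \<longleftrightarrow> pdelta L n i j \<in> F"
    and al: "\<alpha> \<in> substs k n" and be: "\<beta> \<in> substs k n" and r: "r \<in> car L k"
    and eq: "tuple_sub k \<alpha> Fs = tuple_sub k \<beta> Fs"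
    and ar: "psub L k n \<alpha> r \<in> F"
  shows "psub L k n \<beta> r \<in> F"
proof -
  define D where "D = bigmeet L n (\<lambda>l. pdelta L n (\<alpha> l) (\<beta> l)) k"
  have "\<And>l. l \<in> {1..k} \<Longrightarrow> pdelta L n (\<alpha> l) (\<beta> l) \<in> F"
  proof -
    fix l assume l: "l \<in> {1..k}"
    have "tuple_sub k \<alpha> Fs l = tuple_sub k \<beta> Fs l" using eq by simp
    then have "Fs (\<alpha> l) = Fs (\<beta> l)" using l unfolding tuple_sub_def by simp
    then show "pdelta L n (\<alpha> l) (\<beta> l) \<in> F" using fs substs_mem[OF al l] substs_mem[OF be l] by blast
  qed
  then have D0: "D \<in> F \<and> D \<in> car L n" unfolding D_def
    using bigmeet_F[OF cl a1 pf, where k=k and l=k and f="\<lambda>l. pdelta L n (\<alpha> l) (\<beta> l)"] by simp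
  then have D: "D \<in> F" "D \<in> car L n" by auto
  have ac: "psub L k n \<alpha> r \<in> car L n" "psub L k n \<beta> r \<in> car L n"
    using cl al be r unfolding pqf_closed_def by blast+
  have "pmeet L n (psub L k n \<alpha> r) D \<in> F" using meet_F_iff[OF cl a1 pf] ac D ar by blast
  moreover have "pmeet L n (psub L k n \<alpha> r) D = pmeet L n (psub L k n \<beta> r) D"
    using a12 al be r unfolding pqf_ax12_def D_def by blast
  ultimately show ?thesis using meet_F_iff[OF cl a1 pf] ac D by auto
qed

lemma tuple_sub_in: "\<alpha> \<in> substs k n \<Longrightarrow> tuple_sub k \<alpha> Fs \<in> tuples k (Fs ` {1..n})"
  unfolding tuple_sub_def tuples_def substs_def by auto

lemma tuple_surj:
  assumes "x \<in> tuples k (Fs ` {1..n})"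
  shows "\<exists>\<alpha>\<in>substs k n. x = tuple_sub k \<alpha> Fs"
proof -
  define \<alpha> where "\<alpha> = restrict (\<lambda>l. SOME i. i \<in> {1..n} \<and> Fs i = x l) {1..k}"
  have h: "\<And>l. l \<in> {1..k} \<Longrightarrow> \<alpha> l \<in> {1..n} \<and> Fs (\<alpha> l) = x l"
  proof -
    fix l assume l: "l \<in> {1..k}"
    then have "x l \<in> Fs ` {1..n}" using assms unfolding tuples_def by auto
    then have "\<exists>i. i \<in> {1..n} \<and> Fs i = x l" by auto
    then have "(SOME i. i \<in> {1..n} \<and> Fs i = x l) \<in> {1..n} \<and> Fs (SOME i. i \<in> {1..n} \<and> Fs i = x l) = x l"
      by (rule someI_ex)
    then show "\<alpha> l \<in> {1..n} \<and> Fs (\<alpha> l) = x l" unfolding \<alpha>_def using l by simp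
  qed
  have "\<alpha> \<in> substs k n" unfolding substs_def \<alpha>_def using h unfolding \<alpha>_def by auto
  moreover have "x = tuple_sub k \<alpha> Fs"
  proof
    fix l show "x l = tuple_sub k \<alpha> Fs l"
      using h assms unfolding tuple_sub_def tuples_def by (cases "l \<in> {1..k}") auto
  qed
  ultimately show ?thesis by blast
qed

theorem lemma4p16:
  fixes L :: "'a pqf_alg" and n :: nat and F :: "'a set"
    and Fs :: "nat \<Rightarrow> 'w" and W :: "'w set"
  assumes "pqf_closed L" and "pqf_ax1 L" and "pqf_ax2 L" and "pqf_ax3 L"
    and "pqf_ax11 L" and "pqf_ax12 L" and "pqf_ax13 L"
    and "prime_filter L n F"
    and "\<forall>i\<in>{1..n}. \<forall>j\<in>{1..n}. Fs i = Fs j \<longleftrightarrow> pdelta L n i j \<in> F"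
    and "W = Fs ` {1..n}"
  shows "(\<forall>k. \<forall>\<alpha>\<in>substs k n. \<forall>r\<in>car L k.
            tuple_sub k \<alpha> Fs \<in> phiF L n F Fs k r \<longleftrightarrow> psub L k n \<alpha> r \<in> F)
       \<and> pqf_hom_to_A L W (phiF L n F Fs)"
proof -
  note cl = assms(1) and a1 = assms(2) and a2 = assms(3) and a3 = assms(4)
    and a12 = assms(6) and a13 = assms(7) and pf = assms(8) and fs = assms(9) and W = assms(10)
  let ?phi = "phiF L n F Fs"
  have mem: "\<And>k \<alpha> r. \<alpha> \<in> substs k n \<Longrightarrow> r \<in> car L k \<Longrightarrow>
      tuple_sub k \<alpha> Fs \<in> ?phi k r \<longleftrightarrow> psub L k n \<alpha> r \<in> F"
  proof
    fix k \<alpha> r assume al: "\<alpha> \<in> substs k n" and r: "r \<in> car L k"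
    assume "tuple_sub k \<alpha> Fs \<in> ?phi k r"
    then obtain \<beta> where be: "\<beta> \<in> substs k n" "psub L k n \<beta> r \<in> F"
      and eq: "tuple_sub k \<alpha> Fs = tuple_sub k \<beta> Fs" unfolding phiF_def by blast
    show "psub L k n \<alpha> r \<in> F" using well_def[OF cl a1 pf a12 fs be(1) al r eq[symmetric] be(2)] .
  next
    fix k \<alpha> r assume "\<alpha> \<in> substs k n" and "psub L k n \<alpha> r \<in> F"
    then show "tuple_sub k \<alpha> Fs \<in> ?phi k r" unfolding phiF_def by blast
  qed
  have phisub: "\<And>k r. ?phi k r \<subseteq> tuples k W"
    unfolding phiF_def W using tuple_sub_in by blast
  have ext: "\<And>k A B. A \<subseteq> tuples k W \<Longrightarrow> B \<subseteq> tuples k W \<Longrightarrow>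
      (\<And>\<alpha>. \<alpha> \<in> substs k n \<Longrightarrow> tuple_sub k \<alpha> Fs \<in> A \<longleftrightarrow> tuple_sub k \<alpha> Fs \<in> B) \<Longrightarrow> A = B"
  proof -
    fix k A B assume A: "A \<subseteq> tuples k W" and B: "B \<subseteq> tuples k W"
      and h: "\<And>\<alpha>. \<alpha> \<in> substs k n \<Longrightarrow> tuple_sub k \<alpha> Fs \<in> A \<longleftrightarrow> tuple_sub k \<alpha> Fs \<in> B"
    show "A = B"
    proof (intro set_eqI iffI)
      fix x assume "x \<in> A"
      moreover obtain \<alpha> where "\<alpha> \<in> substs k n" "x = tuple_sub k \<alpha> Fs"
        using tuple_surj A \<open>x \<in> A\<close> W by blast
      ultimately show "x \<in> B" using h by blast
    next
      fix x assume "x \<in> B"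
      moreover obtain \<alpha> where "\<alpha> \<in> substs k n" "x = tuple_sub k \<alpha> Fs"
        using tuple_surj B \<open>x \<in> B\<close> W by blast
      ultimately show "x \<in> A" using h by blast
    qed
  qed
  have psubc: "\<And>k m \<alpha> r. \<alpha> \<in> substs k m \<Longrightarrow> r \<in> car L k \<Longrightarrow> psub L k m \<alpha> r \<in> car L m"
    using cl unfolding pqf_closed_def by blast
  have carm: "\<And>k x y. x \<in> car L k \<Longrightarrow> y \<in> car L k \<Longrightarrow> pmeet L k x y \<in> car L k \<and> pjoin L k x y \<in> car L k"
    using cl unfolding pqf_closed_def by blast
  have zc: "\<And>k. pzero L k \<in> car L k" and oc: "\<And>k. pone L k \<in> car L k"
    using cl unfolding pqf_closed_def by blast+
  have dc: "\<And>k i j. i \<in> {1..k} \<Longrightarrow> j \<in> {1..k} \<Longrightarrow> pdelta L k i j \<in> car L k"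
    using cl unfolding pqf_closed_def by blast
  have hom1: "(\<forall>r\<in>car L k. ?phi k r \<subseteq> tuples k W)
        \<and> ?phi k (pzero L k) = {}
        \<and> ?phi k (pone L k) = tuples k W
        \<and> (\<forall>r\<in>car L k. \<forall>s\<in>car L k.
              ?phi k (pjoin L k r s) = ?phi k r \<union> ?phi k s
            \<and> ?phi k (pmeet L k r s) = ?phi k r \<inter> ?phi k s)
        \<and> (\<forall>i\<in>{1..k}. \<forall>j\<in>{1..k}. ?phi k (pdelta L k i j) = diagA W k i j)" for k
  proof (intro conjI ballI)
    show "\<And>r. ?phi k r \<subseteq> tuples k W" by (rule phisub)
    show "?phi k (pzero L k) = {}"
      using a2 zero_notF[OF cl a1 pf] unfolding phiF_def pqf_ax2_def by auto
    show "?phi k (pone L k) = tuples k W"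
      by (rule ext[OF phisub subset_refl]) (use mem oc a2 one_F[OF cl a1 pf] tuple_sub_in W in \<open>auto simp: pqf_ax2_def\<close>)
    fix r s assume r: "r \<in> car L k" and s: "s \<in> car L k"
    show "?phi k (pjoin L k r s) = ?phi k r \<union> ?phi k s"
    proof (rule ext)
      show "?phi k r \<union> ?phi k s \<subseteq> tuples k W" using phisub by blast
      fix \<alpha> assume al: "\<alpha> \<in> substs k n"
      have "psub L k n \<alpha> (pjoin L k r s) = pjoin L n (psub L k n \<alpha> r) (psub L k n \<alpha> s)"
        using a2 al r s unfolding pqf_ax2_def by blast
      then show "tuple_sub k \<alpha> Fs \<in> ?phi k (pjoin L k r s) \<longleftrightarrow> tuple_sub k \<alpha> Fs \<in> ?phi k r \<union> ?phi k s"
        using mem[OF al] r s carm join_F_iff[OF cl a1 pf] psubc[OF al] by auto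
    qed (rule phisub)
    show "?phi k (pmeet L k r s) = ?phi k r \<inter> ?phi k s"
    proof (rule ext)
      show "?phi k r \<inter> ?phi k s \<subseteq> tuples k W" using phisub by blast
      fix \<alpha> assume al: "\<alpha> \<in> substs k n"
      have "psub L k n \<alpha> (pmeet L k r s) = pmeet L n (psub L k n \<alpha> r) (psub L k n \<alpha> s)"
        using a2 al r s unfolding pqf_ax2_def by blast
      then show "tuple_sub k \<alpha> Fs \<in> ?phi k (pmeet L k r s) \<longleftrightarrow> tuple_sub k \<alpha> Fs \<in> ?phi k r \<inter> ?phi k s"
        using mem[OF al] r s carm meet_F_iff[OF cl a1 pf] psubc[OF al] by auto
    qed (rule phisub)
  next
    fix i j assume i: "i \<in> {1..k}" and j: "j \<in> {1..k}"
    show "?phi k (pdelta L k i j) = diagA W k i j"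
    proof (rule ext)
      show "diagA W k i j \<subseteq> tuples k W" unfolding diagA_def by blast
      fix \<alpha> assume al: "\<alpha> \<in> substs k n"
      have "psub L k n \<alpha> (pdelta L k i j) = pdelta L n (\<alpha> i) (\<alpha> j)"
        using a13 al i j unfolding pqf_ax13_def by blast
      moreover have "pdelta L n (\<alpha> i) (\<alpha> j) \<in> F \<longleftrightarrow> Fs (\<alpha> i) = Fs (\<alpha> j)"
        using fs substs_mem[OF al i] substs_mem[OF al j] by blast
      moreover have "tuple_sub k \<alpha> Fs \<in> diagA W k i j \<longleftrightarrow> Fs (\<alpha> i) = Fs (\<alpha> j)"
        using tuple_sub_in[OF al] i j W unfolding diagA_def tuple_sub_def by auto
      ultimately show "tuple_sub k \<alpha> Fs \<in> ?phi k (pdelta L k i j) \<longleftrightarrow> tuple_sub k \<alpha> Fs \<in> diagA W k i j"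
        using mem[OF al dc[OF i j]] by simp
    qed (rule phisub)
  qed
  have hom2: "\<And>k m \<alpha> r. \<alpha> \<in> substs k m \<Longrightarrow> r \<in> car L k \<Longrightarrow>
        ?phi m (psub L k m \<alpha> r) = rel_sub W k m \<alpha> (?phi k r)"
  proof -
    fix k m \<alpha> r assume al: "\<alpha> \<in> substs k m" and r: "r \<in> car L k"
    show "?phi m (psub L k m \<alpha> r) = rel_sub W k m \<alpha> (?phi k r)"
    proof (rule ext[OF phisub])
      show "rel_sub W k m \<alpha> (?phi k r) \<subseteq> tuples m W" unfolding rel_sub_def by blast
      fix \<beta> assume be: "\<beta> \<in> substs m n"
      have cs: "comp_subst k \<beta> \<alpha> \<in> substs k n"
        using al be unfolding substs_def comp_subst_def by auto
      have "psub L k n (comp_subst k \<beta> \<alpha>) r = psub L m n \<beta> (psub L k m \<alpha> r)"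
        using a3 al be r unfolding pqf_ax3_def by blast
      moreover have "tuple_sub k \<alpha> (tuple_sub m \<beta> Fs) = tuple_sub k (comp_subst k \<beta> \<alpha>) Fs"
      proof
        fix l show "tuple_sub k \<alpha> (tuple_sub m \<beta> Fs) l = tuple_sub k (comp_subst k \<beta> \<alpha>) Fs l"
          using substs_mem[OF al] unfolding tuple_sub_def comp_subst_def by auto
      qed
      ultimately show "tuple_sub m \<beta> Fs \<in> ?phi m (psub L k m \<alpha> r) \<longleftrightarrow>
          tuple_sub m \<beta> Fs \<in> rel_sub W k m \<alpha> (?phi k r)"
        using mem[OF be psubc[OF al r]] mem[OF cs r] tuple_sub_in[OF be] W
        unfolding rel_sub_def by auto
    qed
  qed
  show ?thesis
    unfolding pqf_hom_to_A_def
  proof (intro conjI allI ballI)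
    show "\<And>k \<alpha> r. \<alpha> \<in> substs k n \<Longrightarrow> r \<in> car L k \<Longrightarrow>
      tuple_sub k \<alpha> Fs \<in> ?phi k r \<longleftrightarrow> psub L k n \<alpha> r \<in> F" by (rule mem)
  qed (use hom1 hom2 in \<open>simp_all\<close>)
qed

end
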